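(* Let $(M^3,J,\theta)$ be a pseudohermitian 3-manifold with frame $Z_1$, coframe $\theta^1$, connection form $\theta_1{}^1$ and torsion $A^1{}_{\bar1}$ as in the context, and let $\phi\in C^\infty(M)$ be complex with $|\phi|<1$. Let $F=(1-|\phi|^2)^{-1/2}$ and consider the CR structure spanned by $Z_{\bar1}^\phi=F(Z_{\bar1}+\phi Z_1)$ with the same contact form $\theta$ and admissible coframe $\theta^1_\phi=F(\theta^1-\phi\theta^{\bar1})$ (so that $d\theta=i\theta^1_\phi\wedge\theta^{\bar1}_\phi$). Then its Tanaka–Webster connection form $\theta_1{}^1{}_\phi$ and torsion $A^1{}_{\bar1}{}^\phi$ (defined by $\tau^1_\phi=A^1{}_{\bar1}{}^\phi\theta^{\bar1}_\phi$) are $$\theta_1{}^1{}_\phi=\theta_1{}^1-F^{-1}dF-F^{-1}(B_{11}\theta^1+B_{12}\theta^{\bar1}+B_{13}\theta),$$ $$A^1{}_{\bar1}{}^\phi=A^1{}_{\bar1}-F^2\big(\phi_0+\phi\theta_1{}^1(T)-\phi\theta_{\bar1}{}^{\bar1}(T)+\phi^2A^{\bar1}{}_1-|\phi|^2A^1{}_{\bar1}\big),$$ where $B_{11}=F^2\big(-2F_1-\bar\phi F\theta_{\bar1}{}^{\bar1}(Z_{\bar1})+\bar\phi F\theta_1{}^1(Z_{\bar1})-F\bar\phi_{\bar1}-\bar\phi F\phi_1-2\bar\phi F_{\bar1}-|\phi|^2F\theta_1{}^1(Z_1)+|\phi|^2F\theta_{\bar1}{}^{\bar1}(Z_1)\big)$,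 $B_{12}=F^2\big(2|\phi|^2F_{\bar1}+\phi F\theta_1{}^1(Z_1)-\phi F\theta_{\bar1}{}^{\bar1}(Z_1)+F\phi_1+\phi F\bar\phi_{\bar1}+2\phi F_1+|\phi|^2F\theta_{\bar1}{}^{\bar1}(Z_{\bar1})-|\phi|^2F\theta_1{}^1(Z_{\bar1})\big)$, $B_{13}=F^3\big(-\bar\phi(\phi_0+\phi\theta_1{}^1(T)-\phi\theta_{\bar1}{}^{\bar1}(T))+\bar\phi A^1{}_{\bar1}-\phi A^{\bar1}{}_1\big)$.
   Context: $\theta$ contact form, $T$ Reeb field, $Z_1$ local frame of $T_{1,0}$, $Z_{\bar1}=\overline{Z_1}$, $\{\theta,\theta^1,\theta^{\bar1}\}$ dual to $\{T,Z_1,Z_{\bar1}\}$ with $d\theta=i\theta^1\wedge\theta^{\bar1}$. For a coframe $\{\theta,\vartheta^1,\vartheta^{\bar1}\}$ with $d\theta=i\vartheta^1\wedge\vartheta^{\bar1}$, the connection form $\vartheta_1{}^1$ and torsion form $\tau^1$ are uniquely determined by $d\vartheta^1=\vartheta^1\wedge\vartheta_1{}^1+\theta\wedge\tau^1$, $\tau^1\equiv0\bmod\vartheta^{\bar1}$, $\vartheta_1{}^1+\vartheta_{\bar1}{}^{\bar1}=0$. For the original coframe, $\tau^1=A^1{}_{\bar1}\theta^{\bar1}$; $A^{\bar1}{}_1=\overline{A^1{}_{\bar1}}$, $\theta_{\bar1}{}^{\bar1}=\overline{\theta_1{}^1}$. Notation: $\phi_1=Z_1\phi$, $\bar\phi_{\bar1}=Z_{\bar1}\bar\phi$,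 $F_1=Z_1F$, $F_{\bar1}=Z_{\bar1}F$, $\phi_0=T\phi$. *)

theory Defs
  imports Complex_Main
begin

text \<open>A 1-form is stored by its coefficients with respect to the coframe
  (theta, theta^1, theta^{1bar}); a 2-form by its coefficients with respect to
  (theta ^ theta^1, theta ^ theta^{1bar}, theta^1 ^ theta^{1bar}).\<close>

type_synonym 'm fn = "'m \<Rightarrow> complex"
type_synonym 'm form1 = "'m fn \<times> 'm fn \<times> 'm fn"
type_synonym 'm form2 = "'m fn \<times> 'm fn \<times> 'm fn"

definition cnjf :: "'m fn \<Rightarrow> 'm fn" where
  "cnjf f = (\<lambda>x. cnj (f x))"

definition cfn :: "complex \<Rightarrow> 'm fn" where
  "cfn c = (\<lambda>_. c)"

definition zbar :: "('m fn \<Rightarrow> 'm fn) \<Rightarrow> ('m fn \<Rightarrow> 'm fn)" where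
  "zbar Z f = cnjf (Z (cnjf f))"

definition derivation_on :: "'m fn set \<Rightarrow> ('m fn \<Rightarrow> 'm fn) \<Rightarrow> bool" where
  "derivation_on S D \<longleftrightarrow>
     (\<forall>f\<in>S. D f \<in> S) \<and> (\<forall>c. D (cfn c) = cfn 0) \<and>
     (\<forall>f\<in>S. \<forall>g\<in>S. D (\<lambda>x. f x + g x) = (\<lambda>x. D f x + D g x)) \<and>
     (\<forall>f\<in>S. \<forall>g\<in>S. D (\<lambda>x. f x * g x) = (\<lambda>x. f x * D g x + g x * D f x))"

definition function_algebra :: "'m fn set \<Rightarrow> bool" where
  "function_algebra S \<longleftrightarrow> (\<forall>c. cfn c \<in> S) \<and>
     (\<forall>f\<in>S. \<forall>g\<in>S. (\<lambda>x. f x + g x) \<in> S \<and> (\<lambda>x. f x * g x) \<in> S) \<and>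
     (\<forall>f\<in>S. cnjf f \<in> S)"

definition zero1 :: "'m form1" where "zero1 = (cfn 0, cfn 0, cfn 0)"
definition theta0 :: "'m form1" where "theta0 = (cfn 1, cfn 0, cfn 0)"
definition theta1 :: "'m form1" where "theta1 = (cfn 0, cfn 1, cfn 0)"
definition theta1bar :: "'m form1" where "theta1bar = (cfn 0, cfn 0, cfn 1)"

definition add1 :: "'m form1 \<Rightarrow> 'm form1 \<Rightarrow> 'm form1" where
  "add1 a b = (case a of (a0,a1,a2) \<Rightarrow> case b of (b0,b1,b2) \<Rightarrow>
     (\<lambda>x. a0 x + b0 x, \<lambda>x. a1 x + b1 x, \<lambda>x. a2 x + b2 x))"
definition scale1 :: "'m fn \<Rightarrow> 'm form1 \<Rightarrow> 'm form1" where
  "scale1 f a = (case a of (a0,a1,a2) \<Rightarrow>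
     (\<lambda>x. f x * a0 x, \<lambda>x. f x * a1 x, \<lambda>x. f x * a2 x))"
definition sub1 :: "'m form1 \<Rightarrow> 'm form1 \<Rightarrow> 'm form1" where
  "sub1 a b = add1 a (scale1 (cfn (-1)) b)"

text \<open>Complex conjugate of a 1-form (theta real, conj theta^1 = theta^{1bar}).\<close>
definition conj1 :: "'m form1 \<Rightarrow> 'm form1" where
  "conj1 a = (case a of (a0,a1,a2) \<Rightarrow> (cnjf a0, cnjf a2, cnjf a1))"

definition evT :: "'m form1 \<Rightarrow> 'm fn" where "evT a = fst a"
definition evZ1 :: "'m form1 \<Rightarrow> 'm fn" where "evZ1 a = fst (snd a)"
definition evZ1b :: "'m form1 \<Rightarrow> 'm fn" where "evZ1b a = snd (snd a)"

definition add2 :: "'m form2 \<Rightarrow> 'm form2 \<Rightarrow> 'm form2" where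
  "add2 a b = (case a of (a0,a1,a2) \<Rightarrow> case b of (b0,b1,b2) \<Rightarrow>
     (\<lambda>x. a0 x + b0 x, \<lambda>x. a1 x + b1 x, \<lambda>x. a2 x + b2 x))"
definition scale2 :: "'m fn \<Rightarrow> 'm form2 \<Rightarrow> 'm form2" where
  "scale2 f a = (case a of (a0,a1,a2) \<Rightarrow>
     (\<lambda>x. f x * a0 x, \<lambda>x. f x * a1 x, \<lambda>x. f x * a2 x))"
text \<open>conj(theta^theta^1) = theta^theta^{1bar}, conj(theta^1^theta^{1bar}) = - theta^1^theta^{1bar}.\<close>
definition conj2 :: "'m form2 \<Rightarrow> 'm form2" where
  "conj2 a = (case a of (a0,a1,a2) \<Rightarrow> (cnjf a1, cnjf a0, \<lambda>x. - cnj (a2 x)))"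

definition wedge :: "'m form1 \<Rightarrow> 'm form1 \<Rightarrow> 'm form2" where
  "wedge a b = (case a of (a0,a1,a2) \<Rightarrow> case b of (b0,b1,b2) \<Rightarrow>
     (\<lambda>x. a0 x * b1 x - a1 x * b0 x,
      \<lambda>x. a0 x * b2 x - a2 x * b0 x,
      \<lambda>x. a1 x * b2 x - a2 x * b1 x))"

definition dfun :: "('m fn \<Rightarrow> 'm fn) \<Rightarrow> ('m fn \<Rightarrow> 'm fn) \<Rightarrow> 'm fn \<Rightarrow> 'm form1" where
  "dfun T Z f = (T f, Z f, zbar Z f)"

text \<open>d theta = i theta^1 ^ theta^{1bar}.\<close>
definition dtheta :: "'m form2" where "dtheta = (cfn 0, cfn 0, cfn \<i>)"

text \<open>Exterior derivative of a 1-form, given d theta^1 = D (and d theta^{1bar} = conj D).\<close>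
definition d1 :: "('m fn \<Rightarrow> 'm fn) \<Rightarrow> ('m fn \<Rightarrow> 'm fn) \<Rightarrow> 'm form2 \<Rightarrow> 'm form1 \<Rightarrow> 'm form2" where
  "d1 T Z D a = (case a of (a0,a1,a2) \<Rightarrow>
     add2 (add2 (add2 (wedge (dfun T Z a0) theta0) (scale2 a0 dtheta))
                (add2 (wedge (dfun T Z a1) theta1) (scale2 a1 D)))
          (add2 (wedge (dfun T Z a2) theta1bar) (scale2 a2 (conj2 D))))"

definition tw_structure ::
  "('m fn \<Rightarrow> 'm fn) \<Rightarrow> ('m fn \<Rightarrow> 'm fn) \<Rightarrow> 'm form2 \<Rightarrow> 'm form1 \<Rightarrow> 'm form1 \<Rightarrow> 'm form1 \<Rightarrow> bool" where
  "tw_structure T Z D vt omega tau \<longleftrightarrow>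
     d1 T Z D vt = add2 (wedge vt omega) (wedge theta0 tau) \<and>
     (\<exists>g. tau = scale1 g (conj1 vt)) \<and>
     add1 omega (conj1 omega) = zero1"

definition tw_connection ::
  "('m fn \<Rightarrow> 'm fn) \<Rightarrow> ('m fn \<Rightarrow> 'm fn) \<Rightarrow> 'm form2 \<Rightarrow> 'm form1 \<Rightarrow> 'm form1" where
  "tw_connection T Z D vt = (THE omega. \<exists>tau. tw_structure T Z D vt omega tau)"

definition tw_torsion ::
  "('m fn \<Rightarrow> 'm fn) \<Rightarrow> ('m fn \<Rightarrow> 'm fn) \<Rightarrow> 'm form2 \<Rightarrow> 'm form1 \<Rightarrow> 'm form1" where
  "tw_torsion T Z D vt = (THE tau. \<exists>omega. tw_structure T Z D vt omega tau)"

end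

theory Submission
  imports Defs
begin

lemma der_const[simp]: "derivation_on S D \<Longrightarrow> D (\<lambda>_. c) = (\<lambda>_. 0)"
  by (simp add: derivation_on_def cfn_def)
lemma zbar_const[simp]: "derivation_on S D \<Longrightarrow> zbar D (\<lambda>_. c) = (\<lambda>_. 0)"
  using der_const[of S D "cnj c"] by (simp add: zbar_def cnjf_def)
lemma der_mult: "derivation_on S D \<Longrightarrow> f\<in>S \<Longrightarrow> g\<in>S \<Longrightarrow> D (\<lambda>x. f x * g x) = (\<lambda>x. f x * D g x + g x * D f x)"
  by (simp add: derivation_on_def)
lemma der_add: "derivation_on S D \<Longrightarrow> f\<in>S \<Longrightarrow> g\<in>S \<Longrightarrow> D (\<lambda>x. f x + g x) = (\<lambda>x. D f x + D g x)"
  by (simp add: derivation_on_def)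
lemma alg_mult: "function_algebra S \<Longrightarrow> f\<in>S \<Longrightarrow> g\<in>S \<Longrightarrow> (\<lambda>x. f x * g x) \<in> S"
  by (simp add: function_algebra_def)
lemma alg_const: "function_algebra S \<Longrightarrow> (\<lambda>_. c) \<in> S"
  unfolding function_algebra_def cfn_def by blast
lemma alg_cnj: "function_algebra S \<Longrightarrow> f\<in>S \<Longrightarrow> (\<lambda>x. cnj (f x)) \<in> S"
  by (simp add: function_algebra_def cnjf_def)
lemma der_neg: "function_algebra S \<Longrightarrow> derivation_on S D \<Longrightarrow> f\<in>S \<Longrightarrow> D (\<lambda>x. - f x) = (\<lambda>x. - D f x)"
proof -
  assume a: "function_algebra S" "derivation_on S D" "f\<in>S"
  have "D (\<lambda>x. - f x) = D (\<lambda>x. (\<lambda>_. -1) x * f x)" by simp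
  also have "\<dots> = (\<lambda>x. (\<lambda>_. -1) x * D f x + f x * D (\<lambda>_. -1) x)"
    by (rule der_mult[OF a(2) alg_const[OF a(1)] a(3)])
  finally show ?thesis using a by simp
qed

lemma der_rel:
  assumes alg: "function_algebra S" and der: "derivation_on S D" and QS: "Q\<in>S" and PS: "P\<in>S"
    and r: "\<forall>x. Q x * (1 - P x) = 1"
  shows "D Q x * (1 - P x) = Q x * D P x"
proof -
  have QP: "(\<lambda>x. Q x * P x) \<in> S" by (rule alg_mult[OF alg QS PS])
  have eq: "Q = (\<lambda>x. (\<lambda>_. 1) x + (\<lambda>x. Q x * P x) x)"
    using r by (auto simp: fun_eq_iff algebra_simps)
  have "D Q = D (\<lambda>x. (\<lambda>_. 1) x + (\<lambda>x. Q x * P x) x)" by (subst eq) (rule refl)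
  also have "\<dots> = (\<lambda>x. D (\<lambda>_. 1) x + D (\<lambda>x. Q x * P x) x)"
    by (rule der_add[OF der alg_const[OF alg] QP])
  also have "\<dots> = (\<lambda>x. Q x * D P x + P x * D Q x)"
    using der_mult[OF der QS PS] der by simp
  finally have "D Q x = Q x * D P x + P x * D Q x" by (metis)
  then show ?thesis by (simp add: algebra_simps)
qed


lemma conj_zero:
  assumes h: "add1 (a0,a1,a2) (conj1 (a0,a1,a2)) = zero1"
  shows "cnj (a0 x) = - a0 x" "cnj (a1 x) = - a2 x" "cnj (a2 x) = - a1 x"
proof -
  from h have "(\<forall>x. a0 x + cnj (a0 x) = 0) \<and> (\<forall>x. a1 x + cnj (a2 x) = 0) \<and> (\<forall>x. a2 x + cnj (a1 x) = 0)"
    by (simp add: add1_def conj1_def zero1_def cfn_def cnjf_def fun_eq_iff)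
  then show "cnj (a0 x) = - a0 x" "cnj (a1 x) = - a2 x" "cnj (a2 x) = - a1 x"
    by (simp_all add: eq_neg_iff_add_eq_0 add.commute)
qed

lemma core:
  fixes f fi p q tp tq tf zf zfc zp zpc w0 w1 w2 a ac B11 B12 B13 Ap W0 W1 W2 :: complex
  assumes R1: "f*f*(1-p*q) = 1" and Rfi: "f*fi = 1"
    and RT: "(f*tf+f*tf)*(1-p*q) = f*f*(p*tq+q*tp)"
    and B11: "B11 = f^2 * (- 2 * zf + 2 * q * f * w2 - f * zpc - q * f * zp - 2 * q * zfc - 2 * (p*q) * f * w1)"
    and B12: "B12 = f^2 * (2 * (p*q) * zfc + 2 * p * f * w1 + f * zp + p * f * zpc + 2 * p * zf - 2 * (p*q) * f * w2)"
    and B13: "B13 = f^3 * (- q * (tp + 2 * p * w0) + q * a - p * ac)"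
    and Ap: "Ap = a - f^2 * (tp + 2 * p * w0 + p^2 * ac - (p*q) * a)"
    and W0: "W0 = w0 - fi * tf - fi * B13"
    and W1: "W1 = w1 - fi * zf - fi * B11"
    and W2: "W2 = w2 - fi * zfc - fi * B12"
  shows "tf - f*w0 - f*p*ac = -(f*W0) + Ap*(-(f*q))"
    and "f*a - (f*tp + p*tf) - f*p*w0 = (f*p)*W0 + Ap*f"
    and "-zfc + f*w2 - (f*zp + p*zf) - f*p*w1 = f*W2 + f*p*W1"
    and "- w0 - fi*tf - fi * (f^3 * (- p * (tq - 2 * q * w0) + p * ac - q * a)) = - W0"
    and "- w2 - fi*zfc - fi * (f^2 * (-2*zfc - 2*p*f*w1 - f*zp - p*f*zpc - 2*p*zf + 2*(p*q)*f*w2)) = - W2"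
proof -
  show "tf - f*w0 - f*p*ac = -(f*W0) + Ap*(-(f*q))"
    unfolding W0 B13 Ap using R1 Rfi RT by algebra
  show "f*a - (f*tp + p*tf) - f*p*w0 = (f*p)*W0 + Ap*f"
    unfolding W0 B13 Ap using R1 Rfi RT by algebra
  show "-zfc + f*w2 - (f*zp + p*zf) - f*p*w1 = f*W2 + f*p*W1"
    unfolding W2 W1 B11 B12 using R1 Rfi by algebra
  show "- w0 - fi*tf - fi * (f^3 * (- p * (tq - 2 * q * w0) + p * ac - q * a)) = - W0"
    unfolding W0 B13 using R1 Rfi RT by algebra
  show "- w2 - fi*zfc - fi * (f^2 * (-2*zfc - 2*p*f*w1 - f*zp - p*f*zpc - 2*p*zf + 2*(p*q)*f*w2)) = - W2"
    unfolding W2 B12 using R1 Rfi by algebra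
qed

lemma hom1:
  fixes f p q x y :: complex
  assumes R1: "f*f*(1-p*q) = 1" and "-(f*x) + y*(-(f*q)) = 0" and "(f*p)*x + y*f = 0"
  shows "x = 0" "y = 0"
  using assms by algebra+

lemma hom2:
  fixes f p q x1 x2 :: complex
  assumes R1: "f*f*(1-p*q) = 1" and "f*x2 + f*p*x1 = 0" and "-(f*x1) - f*q*x2 = 0"
  shows "x1 = 0" "x2 = 0"
  using assms by algebra+

theorem proposition4p1:
  fixes S :: "'m fn set"
    and T Z1 :: "'m fn \<Rightarrow> 'm fn"
    and D :: "'m form2"
    and omega :: "'m form1"
    and A phi F B11 B12 B13 Aphi :: "'m fn"
  assumes alg: "function_algebra S"
    and derT: "derivation_on S T" and derZ: "derivation_on S Z1"
    and Treal: "\<forall>f\<in>S. T (cnjf f) = cnjf (T f)"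
    and orig: "tw_structure T Z1 D theta1 omega (scale1 A theta1bar)"
    and phiS: "phi \<in> S" and phi_lt: "\<forall>x. cmod (phi x) < 1"
    and F_def: "F = (\<lambda>x. complex_of_real ((1 - (cmod (phi x))\<^sup>2) powr (-1/2)))"
    and FS: "F \<in> S"
    and B11_def: "B11 = (\<lambda>x. (F x)\<^sup>2 * (- 2 * Z1 F x
        - cnj (phi x) * F x * evZ1b (conj1 omega) x
        + cnj (phi x) * F x * evZ1b omega x
        - F x * zbar Z1 (cnjf phi) x
        - cnj (phi x) * F x * Z1 phi x
        - 2 * cnj (phi x) * zbar Z1 F x
        - complex_of_real ((cmod (phi x))\<^sup>2) * F x * evZ1 omega x
        + complex_of_real ((cmod (phi x))\<^sup>2) * F x * evZ1 (conj1 omega) x))"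
    and B12_def: "B12 = (\<lambda>x. (F x)\<^sup>2 * (2 * complex_of_real ((cmod (phi x))\<^sup>2) * zbar Z1 F x
        + phi x * F x * evZ1 omega x
        - phi x * F x * evZ1 (conj1 omega) x
        + F x * Z1 phi x
        + phi x * F x * zbar Z1 (cnjf phi) x
        + 2 * phi x * Z1 F x
        + complex_of_real ((cmod (phi x))\<^sup>2) * F x * evZ1b (conj1 omega) x
        - complex_of_real ((cmod (phi x))\<^sup>2) * F x * evZ1b omega x))"
    and B13_def: "B13 = (\<lambda>x. (F x)^3 * (- cnj (phi x) * (T phi x
          + phi x * evT omega x - phi x * evT (conj1 omega) x)
        + cnj (phi x) * A x - phi x * cnj (A x)))"
    and Aphi_def: "Aphi = (\<lambda>x. A x - (F x)\<^sup>2 * (T phi x + phi x * evT omega x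
        - phi x * evT (conj1 omega) x + (phi x)\<^sup>2 * cnj (A x)
        - complex_of_real ((cmod (phi x))\<^sup>2) * A x))"
  shows "tw_connection T Z1 D (scale1 F (sub1 theta1 (scale1 phi theta1bar))) =
           sub1 (sub1 omega (scale1 (\<lambda>x. inverse (F x)) (dfun T Z1 F)))
                (scale1 (\<lambda>x. inverse (F x))
                   (add1 (add1 (scale1 B11 theta1) (scale1 B12 theta1bar)) (scale1 B13 theta0)))
       \<and> tw_torsion T Z1 D (scale1 F (sub1 theta1 (scale1 phi theta1bar))) =
           scale1 Aphi (conj1 (scale1 F (sub1 theta1 (scale1 phi theta1bar))))"
proof -
  obtain w0 w1 w2 where om: "omega = (w0,w1,w2)" by (cases omega) auto
  obtain D0 D1 D2 where Dd: "D = (D0,D1,D2)" by (cases D) auto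
  have "d1 T Z1 D theta1 = add2 (wedge theta1 omega) (wedge theta0 (scale1 A theta1bar))"
    using orig by (simp add: tw_structure_def)
  then have "(\<forall>x. D0 x = - w0 x) \<and> (\<forall>x. D1 x = A x) \<and> (\<forall>x. D2 x = w2 x)"
    using derT derZ by (simp add: om Dd d1_def theta1_def theta0_def theta1bar_def dfun_def wedge_def add2_def scale2_def scale1_def cfn_def conj2_def fun_eq_iff)
  then have Dx: "D = (\<lambda>x. - w0 x, A, w2)" by (simp add: Dd fun_eq_iff)
  have "add1 omega (conj1 omega) = zero1" using orig by (simp add: tw_structure_def)
  then have wr0: "add1 (w0,w1,w2) (conj1 (w0,w1,w2)) = zero1" unfolding om .
  note wr = conj_zero[OF wr0]
  have Freal: "\<And>x. cnj (F x) = F x" by (simp add: F_def)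
  have cphiS: "(\<lambda>x. cnj (phi x)) \<in> S" by (rule alg_cnj[OF alg phiS])
  have cF: "cnjf F = F" by (simp add: cnjf_def Freal)
  have "T (cnjf F) = cnjf (T F)" using Treal FS by blast
  then have "T F = cnjf (T F)" unfolding cF .
  then have TFr: "\<And>x. cnj (T F x) = T F x"
  proof -
    fix x assume "T F = cnjf (T F)"
    then have "T F x = cnjf (T F) x" by (rule fun_cong)
    then show "cnj (T F x) = T F x" unfolding cnjf_def by simp
  qed
  have Tcphi: "T (\<lambda>x. cnj (phi x)) = (\<lambda>x. cnj (T phi x))" using Treal phiS by (simp add: cnjf_def)
  define vt where "vt = scale1 F (sub1 theta1 (scale1 phi theta1bar))"
  have vt: "vt = (\<lambda>_. 0, F, \<lambda>x. - (F x * phi x))"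
    by (simp add: vt_def scale1_def sub1_def add1_def theta1_def theta1bar_def cfn_def)
  have Fp: "(\<lambda>x. F x * phi x) \<in> S" by (rule alg_mult[OF alg FS phiS])
  have Fcp: "(\<lambda>x. F x * cnj (phi x)) \<in> S" by (rule alg_mult[OF alg FS cphiS])
  have Tv2: "T (\<lambda>x. - (F x * phi x)) = (\<lambda>x. - (F x * T phi x + phi x * T F x))"
    using der_neg[OF alg derT Fp] der_mult[OF derT FS phiS] by simp
  have Zv2: "Z1 (\<lambda>x. - (F x * phi x)) = (\<lambda>x. - (F x * Z1 phi x + phi x * Z1 F x))"
    using der_neg[OF alg derZ Fp] der_mult[OF derZ FS phiS] by simp
  have Zbv2: "zbar Z1 (\<lambda>x. - (F x * phi x)) = (\<lambda>x. - (F x * cnj (Z1 (\<lambda>x. cnj (phi x)) x) + phi x * cnj (Z1 F x)))"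
  proof -
    have "cnjf (\<lambda>x. - (F x * phi x)) = (\<lambda>x. - (F x * cnj (phi x)))" by (simp add: cnjf_def Freal)
    then show ?thesis
      using der_neg[OF alg derZ Fcp] der_mult[OF derZ FS cphiS] by (simp add: zbar_def cnjf_def Freal)
  qed
  have ZbF: "zbar Z1 F = (\<lambda>x. cnj (Z1 F x))" by (simp add: zbar_def cF) (simp add: cnjf_def)
  have dvt: "d1 T Z1 D vt = (\<lambda>x. T F x - F x * w0 x - F x * phi x * cnj (A x),
       \<lambda>x. F x * A x - (F x * T phi x + phi x * T F x) + F x * phi x * cnj (w0 x),
       \<lambda>x. - cnj (Z1 F x) + F x * w2 x - (F x * Z1 phi x + phi x * Z1 F x) + F x * phi x * cnj (w2 x))"
    by (simp add: vt Dx d1_def theta1_def theta0_def theta1bar_def dfun_def wedge_def add2_def scale2_def cfn_def conj2_def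
     Tv2 Zv2 Zbv2 ZbF der_const[OF derT] der_const[OF derZ] zbar_const[OF derZ] cnjf_def fun_eq_iff algebra_simps)
  have cm: "\<And>z. complex_of_real ((cmod z)\<^sup>2) = z * cnj z" by (rule complex_norm_square)
  have R1: "\<And>x. F x * F x * (1 - phi x * cnj (phi x)) = 1"
  proof -
    fix x
    define r where "r = 1 - (cmod (phi x))\<^sup>2"
    have rpos: "r > 0" using phi_lt[rule_format, of x] unfolding r_def
      by (simp add: abs_square_less_1)
    have "r powr (-1/2) * r powr (-1/2) = r powr (-1/2 + -1/2)" by (rule powr_add[symmetric])
    also have "\<dots> = r powr (- 1)" by simp
    also have "\<dots> = inverse r" using rpos by (simp add: powr_minus)
    finally have "r powr (-1/2) * r powr (-1/2) = inverse r" .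
    then have "F x * F x = complex_of_real (inverse r)"
      unfolding F_def r_def by (metis of_real_mult)
    moreover have "1 - phi x * cnj (phi x) = complex_of_real r" unfolding r_def
      using cm[of "phi x"] by simp
    ultimately have "F x * F x * (1 - phi x * cnj (phi x)) = complex_of_real (inverse r * r)"
      by (simp only: of_real_mult)
    then show "F x * F x * (1 - phi x * cnj (phi x)) = 1" using rpos by simp
  qed
  have Fnz: "\<And>x. F x \<noteq> 0"
  proof
    fix x assume "F x = 0" then show False using R1[of x] by simp
  qed
  have Rfi: "\<And>x. F x * inverse (F x) = 1" using Fnz by simp
  have QS: "(\<lambda>x. F x * F x) \<in> S" by (rule alg_mult[OF alg FS FS])
  have PS: "(\<lambda>x. phi x * cnj (phi x)) \<in> S" by (rule alg_mult[OF alg phiS cphiS])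
  have RQ: "\<forall>x. (\<lambda>x. F x * F x) x * (1 - (\<lambda>x. phi x * cnj (phi x)) x) = 1" using R1 by simp
  have RT: "\<And>x. (F x * T F x + F x * T F x) * (1 - phi x * cnj (phi x)) = F x * F x * (phi x * cnj (T phi x) + cnj (phi x) * T phi x)"
    using der_rel[OF alg derT QS PS RQ] der_mult[OF derT FS FS] der_mult[OF derT phiS cphiS] Tcphi by simp
  have zbcp: "zbar Z1 (\<lambda>x. cnj (phi x)) = (\<lambda>x. cnj (Z1 phi x))" by (simp add: zbar_def cnjf_def)
  have cm2: "\<And>z. (complex_of_real (cmod z))\<^sup>2 = z * cnj z" using cm by simp
  define W0 where "W0 = (\<lambda>x. w0 x - inverse (F x) * T F x - inverse (F x) * B13 x)"
  define W1 where "W1 = (\<lambda>x. w1 x - inverse (F x) * Z1 F x - inverse (F x) * B11 x)"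
  define W2 where "W2 = (\<lambda>x. w2 x - inverse (F x) * cnj (Z1 F x) - inverse (F x) * B12 x)"
  have Wx: "sub1 (sub1 omega (scale1 (\<lambda>x. inverse (F x)) (dfun T Z1 F)))
                (scale1 (\<lambda>x. inverse (F x))
                   (add1 (add1 (scale1 B11 theta1) (scale1 B12 theta1bar)) (scale1 B13 theta0))) = (W0, W1, W2)"
    by (simp add: W0_def W1_def W2_def om sub1_def add1_def scale1_def theta1_def theta1bar_def theta0_def dfun_def cfn_def ZbF fun_eq_iff algebra_simps)
  have B11x: "\<And>x. B11 x = (F x)^2 * (- 2 * Z1 F x + 2 * cnj (phi x) * F x * w2 x - F x * cnj (Z1 phi x) - cnj (phi x) * F x * Z1 phi x - 2 * cnj (phi x) * cnj (Z1 F x) - 2 * (phi x * cnj (phi x)) * F x * w1 x)"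
    unfolding B11_def by ((simp add: om conj1_def evZ1_def evZ1b_def cnjf_def wr ZbF zbcp cm cm2 Fnz); (algebra)?)
  have B12x: "\<And>x. B12 x = (F x)^2 * (2 * (phi x * cnj (phi x)) * cnj (Z1 F x) + 2 * phi x * F x * w1 x + F x * Z1 phi x + phi x * F x * cnj (Z1 phi x) + 2 * phi x * Z1 F x - 2 * (phi x * cnj (phi x)) * F x * w2 x)"
    unfolding B12_def by ((simp add: om conj1_def evZ1_def evZ1b_def cnjf_def wr ZbF zbcp cm cm2 Fnz); (algebra)?)
  have B13x: "\<And>x. B13 x = (F x)^3 * (- cnj (phi x) * (T phi x + 2 * phi x * w0 x) + cnj (phi x) * A x - phi x * cnj (A x))"
    unfolding B13_def by ((simp add: om conj1_def evT_def cnjf_def wr cm cm2 Fnz); (algebra)?)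
  have Apx: "\<And>x. Aphi x = A x - (F x)^2 * (T phi x + 2 * phi x * w0 x + (phi x)^2 * cnj (A x) - (phi x * cnj (phi x)) * A x)"
    unfolding Aphi_def by ((simp add: om conj1_def evT_def cnjf_def wr cm cm2 Fnz); (algebra)?)
  have W0x: "\<And>x. W0 x = w0 x - inverse (F x) * T F x - inverse (F x) * B13 x" by (simp add: W0_def)
  have W1x: "\<And>x. W1 x = w1 x - inverse (F x) * Z1 F x - inverse (F x) * B11 x" by (simp add: W1_def)
  have W2x: "\<And>x. W2 x = w2 x - inverse (F x) * cnj (Z1 F x) - inverse (F x) * B12 x" by (simp add: W2_def)
  note C = core[OF R1 Rfi RT B11x B12x B13x Apx W0x W1x W2x]
  have cW0: "cnj (W0 x) = - W0 x" for x
    using C(4)[of x] by ((simp add: W0x B13x wr Freal TFr); (algebra)?)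
  have cW2: "cnj (W1 x) = - W2 x" for x
    using C(5)[of x] by ((simp add: W1x B11x wr Freal TFr); (algebra)?)
  have cW1: "cnj (W2 x) = - W1 x" for x
  proof -
    have "W1 x = cnj (cnj (W1 x))" by simp
    also have "\<dots> = - cnj (W2 x)" by (simp add: cW2)
    finally show ?thesis by simp
  qed
  have cvt: "conj1 vt = (\<lambda>_. 0, \<lambda>x. - (F x * cnj (phi x)), F)"
    by (simp add: vt conj1_def cnjf_def Freal)
  have ex: "tw_structure T Z1 D vt (W0,W1,W2) (scale1 Aphi (conj1 vt))"
    unfolding tw_structure_def
  proof (intro conjI)
    show "d1 T Z1 D vt = add2 (wedge vt (W0, W1, W2)) (wedge theta0 (scale1 Aphi (conj1 vt)))"
      unfolding dvt cvt
      apply (simp add: vt wedge_def add2_def scale1_def theta0_def cfn_def wr fun_eq_iff)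
      apply (intro conjI allI)
      subgoal for x using C(1)[of x] C(2)[of x] C(3)[of x] by algebra
      subgoal for x using C(1)[of x] C(2)[of x] C(3)[of x] by algebra
      subgoal for x using C(1)[of x] C(2)[of x] C(3)[of x] by algebra
      done
    show "\<exists>g. scale1 Aphi (conj1 vt) = scale1 g (conj1 vt)" by blast
    show "add1 (W0, W1, W2) (conj1 (W0, W1, W2)) = zero1"
      by (simp add: add1_def conj1_def cnjf_def cW0 cW1 cW2 zero1_def cfn_def)
  qed
  have uniq: "om' = (W0,W1,W2) \<and> tau' = scale1 Aphi (conj1 vt)"
    if st: "tw_structure T Z1 D vt om' tau'" for om' tau'
  proof -
    obtain a0 a1 a2 where oa: "om' = (a0,a1,a2)" by (cases om') auto
    from st obtain g where tg: "tau' = scale1 g (conj1 vt)" by (auto simp: tw_structure_def)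
    from st have "add1 (a0,a1,a2) (conj1 (a0,a1,a2)) = zero1" by (simp add: tw_structure_def oa)
    note ca = conj_zero[OF this]
    from st have "d1 T Z1 D vt = add2 (wedge vt (a0,a1,a2)) (wedge theta0 (scale1 g (conj1 vt)))"
      by (simp add: tw_structure_def oa tg)
    then have E: "\<forall>x. (T F x - F x * w0 x - F x * phi x * cnj (A x) = - (F x * a0 x) - g x * (F x * cnj (phi x)))
       \<and> (F x * A x - (F x * T phi x + phi x * T F x) - F x * phi x * w0 x = F x * phi x * a0 x + g x * F x)
       \<and> (- cnj (Z1 F x) + F x * w2 x - (F x * Z1 phi x + phi x * Z1 F x) - F x * phi x * w1 x = F x * a2 x + F x * phi x * a1 x)"
      unfolding dvt cvt by (simp add: vt wedge_def add2_def scale1_def theta0_def cfn_def wr fun_eq_iff algebra_simps)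
    have h0: "a0 x = W0 x \<and> g x = Aphi x" for x
    proof -
      note Ex = E[rule_format, of x]
      have q1: "-(F x * (a0 x - W0 x)) + (g x - Aphi x) * (-(F x * cnj (phi x))) = 0"
        using conjunct1[OF Ex] C(1)[of x] by algebra
      have q2: "F x * phi x * (a0 x - W0 x) + (g x - Aphi x) * F x = 0"
        using conjunct1[OF conjunct2[OF Ex]] C(2)[of x] by algebra
      show ?thesis using hom1[OF R1[of x] q1 q2] by simp
    qed
    have h1: "a1 x = W1 x \<and> a2 x = W2 x" for x
    proof -
      note Ex = E[rule_format, of x]
      have q1: "F x * (a2 x - W2 x) + F x * phi x * (a1 x - W1 x) = 0"
        using conjunct2[OF conjunct2[OF Ex]] C(3)[of x] by algebra
      have "cnj (F x * (a2 x - W2 x) + F x * phi x * (a1 x - W1 x)) = 0" by (simp only: q1) simp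
      then have q2: "-(F x * (a1 x - W1 x)) - F x * cnj (phi x) * (a2 x - W2 x) = 0"
        by (simp add: Freal ca cW1 cW2) algebra
      show ?thesis using hom2[OF R1[of x] q1 q2] by simp
    qed
    have "g = Aphi" using h0 by (simp add: fun_eq_iff)
    moreover have "om' = (W0,W1,W2)" using h0 h1 by (simp add: oa fun_eq_iff)
    ultimately show ?thesis by (simp add: tg)
  qed
  have conn: "tw_connection T Z1 D vt = (W0,W1,W2)"
    unfolding tw_connection_def
  proof (rule the_equality)
    show "\<exists>tau. tw_structure T Z1 D vt (W0, W1, W2) tau" using ex by blast
    show "om = (W0,W1,W2)" if "\<exists>tau. tw_structure T Z1 D vt om tau" for om
      using that uniq by blast
  qed
  have tors: "tw_torsion T Z1 D vt = scale1 Aphi (conj1 vt)"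
    unfolding tw_torsion_def
  proof (rule the_equality)
    show "\<exists>om. tw_structure T Z1 D vt om (scale1 Aphi (conj1 vt))" using ex by blast
    show "tau = scale1 Aphi (conj1 vt)" if "\<exists>om. tw_structure T Z1 D vt om tau" for tau
      using that uniq by blast
  qed
  show ?thesis using conn tors Wx unfolding vt_def by simp
qed
end
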